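(* Let $V$ be a vector space of dimension $2r$ ($r\ge1$) over $\mathbb{F}_2$ with nondegenerate quadratic form $Q$. Then $V$ has a symmetric basis if and only if either $Q$ is hyperbolic and $r\equiv 0$ or $1\pmod 4$, or $Q$ is elliptic and $r\equiv 2$ or $3\pmod 4$.
   Context: The associated bilinear form of $Q$ is $B(u,v)=Q(u+v)-Q(u)-Q(v)$, and $Q$ is nondegenerate if $B$ is. $Q$ is hyperbolic if $V$ has a basis $e_1,\dots,e_r,f_1,\dots,f_r$ with $Q(e_i)=Q(f_i)=0$, $B(e_i,e_j)=B(f_i,f_j)=0$, $B(e_i,f_j)=\delta_{ij}$; it is elliptic if $V$ has a basis $e_1,\dots,e_{r-1},f_1,\dots,f_{r-1},x,y$ with the same relations among the $e_i,f_i$, all $e_i,f_i$ orthogonal to $x,y$, $Q(x)=Q(y)=1$, $B(x,y)=1$. A basis $\{v_1,\dots,v_{2r}\}$ is symmetric if $Q(v_i)=0$ for all $i$ and $B(v_i,v_j)=1$ for all $i\ne j$. *)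

theory Defs
  imports Complex_Main "HOL-Library.Z2"
begin

text \<open>Vector spaces over F_2 are modelled by an abelian group type 'v together with a
  scalar multiplication scale :: bit => 'v => 'v satisfying the locale vector_space
  (type bit from HOL-Library.Z2 is the field with two elements).\<close>

definition polar :: "('v::ab_group_add \<Rightarrow> bit) \<Rightarrow> 'v \<Rightarrow> 'v \<Rightarrow> bit" where
  "polar Q u v = Q (u + v) - Q u - Q v"

definition is_quadratic_form :: "(bit \<Rightarrow> 'v::ab_group_add \<Rightarrow> 'v) \<Rightarrow> ('v \<Rightarrow> bit) \<Rightarrow> bool" where
  "is_quadratic_form scale Q \<longleftrightarrow>
     (\<forall>a v. Q (scale a v) = a^2 * Q v) \<and>
     (\<forall>u v w. polar Q (u + v) w = polar Q u w + polar Q v w) \<and>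
     (\<forall>a u w. polar Q (scale a u) w = a * polar Q u w)"

definition nondegenerate :: "('v::ab_group_add \<Rightarrow> bit) \<Rightarrow> bool" where
  "nondegenerate Q \<longleftrightarrow> (\<forall>u. (\<forall>v. polar Q u v = 0) \<longrightarrow> u = 0)"

definition basis_family :: "(bit \<Rightarrow> 'v::ab_group_add \<Rightarrow> 'v) \<Rightarrow> (nat \<Rightarrow> 'v) \<Rightarrow> nat \<Rightarrow> bool" where
  "basis_family scale g n \<longleftrightarrow>
     inj_on g {..<n} \<and> \<not> module.dependent scale (g ` {..<n}) \<and>
     module.span scale (g ` {..<n}) = UNIV"

definition hyperbolic :: "(bit \<Rightarrow> 'v::ab_group_add \<Rightarrow> 'v) \<Rightarrow> ('v \<Rightarrow> bit) \<Rightarrow> nat \<Rightarrow> bool" where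
  "hyperbolic scale Q r \<longleftrightarrow> (\<exists>e f :: nat \<Rightarrow> 'v.
     basis_family scale (\<lambda>i. if i < r then e i else f (i - r)) (2 * r) \<and>
     (\<forall>i<r. Q (e i) = 0 \<and> Q (f i) = 0) \<and>
     (\<forall>i<r. \<forall>j<r. polar Q (e i) (e j) = 0 \<and> polar Q (f i) (f j) = 0 \<and>
                   polar Q (e i) (f j) = (if i = j then 1 else 0)))"

definition elliptic :: "(bit \<Rightarrow> 'v::ab_group_add \<Rightarrow> 'v) \<Rightarrow> ('v \<Rightarrow> bit) \<Rightarrow> nat \<Rightarrow> bool" where
  "elliptic scale Q r \<longleftrightarrow> (\<exists>(e :: nat \<Rightarrow> 'v) f x y.
     basis_family scale
       (\<lambda>i. if i < r - 1 then e i else if i < 2 * (r - 1) then f (i - (r - 1))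
            else if i = 2 * (r - 1) then x else y) (2 * r) \<and>
     (\<forall>i<r-1. Q (e i) = 0 \<and> Q (f i) = 0) \<and>
     (\<forall>i<r-1. \<forall>j<r-1. polar Q (e i) (e j) = 0 \<and> polar Q (f i) (f j) = 0 \<and>
                   polar Q (e i) (f j) = (if i = j then 1 else 0)) \<and>
     (\<forall>i<r-1. polar Q (e i) x = 0 \<and> polar Q (e i) y = 0 \<and>
              polar Q (f i) x = 0 \<and> polar Q (f i) y = 0) \<and>
     Q x = 1 \<and> Q y = 1 \<and> polar Q x y = 1)"

definition has_symmetric_basis :: "(bit \<Rightarrow> 'v::ab_group_add \<Rightarrow> 'v) \<Rightarrow> ('v \<Rightarrow> bit) \<Rightarrow> nat \<Rightarrow> bool" where
  "has_symmetric_basis scale Q r \<longleftrightarrow> (\<exists>v :: nat \<Rightarrow> 'v.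
     basis_family scale v (2 * r) \<and>
     (\<forall>i<2*r. Q (v i) = 0) \<and>
     (\<forall>i<2*r. \<forall>j<2*r. i \<noteq> j \<longrightarrow> polar Q (v i) (v j) = 1))"

end

theory Submission
  imports Defs
begin

lemma bit_add_self [simp]: "(a::bit) + a = 0"
  by (cases a) simp_all
lemma bit_add_self2 [simp]: "(a::bit) + (a + b) = b"
  by (cases a; cases b) simp_all
lemma bit_one_one [simp]: "(1::bit) + 1 = 0" by simp

definition alt :: "nat \<Rightarrow> bit" where "alt m = (if even m then 0 else 1)"

primrec Tsum :: "(nat \<Rightarrow> 'v::ab_group_add) \<Rightarrow> (nat \<Rightarrow> 'v) \<Rightarrow> nat \<Rightarrow> 'v" where
  "Tsum p q 0 = 0"
| "Tsum p q (Suc m) = Tsum p q m + p m + q m"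

locale qfs = vector_space scale for scale :: "bit \<Rightarrow> 'v::ab_group_add \<Rightarrow> 'v" +
  fixes Q :: "'v \<Rightarrow> bit"
  assumes qf: "is_quadratic_form scale Q"
begin

abbreviation B where "B \<equiv> polar Q"

lemma add_self [simp]: "(u::'v) + u = 0"
proof -
  have "u + u = scale 1 u + scale 1 u" by simp
  also have "\<dots> = scale (1 + 1) u" by (simp only: scale_left_distrib)
  also have "\<dots> = 0" by simp
  finally show ?thesis .
qed

lemma neg_eq [simp]: "- (u::'v) = u"
  by (rule minus_unique) simp

lemma Q0 [simp]: "Q 0 = 0"
  using qf unfolding is_quadratic_form_def
proof -
  have "Q (scale 0 0) = 0^2 * Q 0" using qf unfolding is_quadratic_form_def by blast
  then show ?thesis by simp
qed

lemma B_def': "B u v = Q (u + v) + Q u + Q v"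
  by (simp add: polar_def)

lemma Q_add: "Q (u + v) = Q u + Q v + B u v"
  by (cases "Q u"; cases "Q v"; cases "Q (u+v)") (simp_all add: polar_def)

lemma B_sym: "B u v = B v u"
  by (cases "Q u"; cases "Q v"; cases "Q (u+v)") (simp_all add: polar_def add.commute)

lemma B_self [simp]: "B u u = 0"
  by (simp add: polar_def)

lemma B_addL [simp]: "B (u + v) w = B u w + B v w"
  using qf unfolding is_quadratic_form_def by blast

lemma B_addR [simp]: "B w (u + v) = B w u + B w v"
  using B_addL B_sym by metis

lemma B_scaleL [simp]: "B (scale a u) w = a * B u w"
  using qf unfolding is_quadratic_form_def by blast

lemma B_0L [simp]: "B 0 w = 0"
  using B_addL[of 0 0 w] by simp

lemma B_0R [simp]: "B w 0 = 0"
  using B_0L B_sym by metis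

lemma B_sumL: "finite A \<Longrightarrow> B (sum f A) w = (\<Sum>a\<in>A. B (f a) w)"
  by (induction A rule: finite_induct) auto


lemma dual_basis:
  assumes d: "dim (UNIV::'v set) = n" and n0: "n > 0"
    and du: "\<forall>i<n. \<exists>h. \<forall>j<n. B (g j) h = (if j = i then 1 else 0)"
  shows "basis_family scale g n"
proof -
  have inj: "inj_on g {..<n}"
  proof (rule inj_onI)
    fix i j assume i: "i \<in> {..<n}" and j: "j \<in> {..<n}" and e: "g i = g j"
    from du i obtain h where h: "\<forall>j<n. B (g j) h = (if j = i then 1 else 0)" by auto
    from h i j e show "i = j" by (metis lessThan_iff zero_neq_one)
  qed
  define G where "G = g ` {..<n}"
  have indep: "independent G"
  proof
    assume "dependent G"
    then obtain t u where t: "finite t" "t \<subseteq> G" and s: "(\<Sum>v\<in>t. scale (u v) v) = 0"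
      and ex: "\<exists>v\<in>t. u v \<noteq> 0"
      unfolding dependent_explicit by blast
    from ex obtain x where x: "x \<in> t" "u x \<noteq> 0" by blast
    then obtain i where i: "i < n" "x = g i" using t G_def by blast
    from du i obtain h where h: "\<forall>j<n. B (g j) h = (if j = i then 1 else 0)" by auto
    have hy: "B y h = (if y = x then 1 else 0)" if "y \<in> t" for y
    proof -
      from that t G_def obtain j where j: "j < n" "y = g j" by blast
      have "(j = i) = (y = x)" using inj i j unfolding inj_on_def by auto
      then show ?thesis using h j by auto
    qed
    have "0 = B (\<Sum>v\<in>t. scale (u v) v) h" using s by simp
    also have "\<dots> = (\<Sum>v\<in>t. u v * B v h)" using t(1) by (simp add: B_sumL)
    also have "\<dots> = (\<Sum>v\<in>t. if v = x then u v else 0)"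
      by (rule sum.cong) (auto simp: hy)
    also have "\<dots> = u x" using t(1) x(1) by simp
    finally show False using x(2) by simp
  qed
  have cardG: "card G = n" using inj G_def by (simp add: card_image)
  obtain A where A: "independent A" "UNIV \<subseteq> span A" "card A = n"
    using basis_exists[of UNIV] d by metis
  have fA: "finite A" using A(3) n0 card_ge_0_finite by blast
  have "span G = UNIV"
  proof (rule ccontr)
    assume "span G \<noteq> UNIV"
    then obtain x where x: "x \<notin> span G" by auto
    have i2: "independent (insert x G)" using independent_insertI[OF x indep] .
    have "finite (insert x G) \<and> card (insert x G) \<le> card A"
      using independent_span_bound[OF fA i2] A(2) by auto
    moreover have "x \<notin> G" using x span_base by blast
    ultimately show False using cardG A(3) G_def by simp
  qed
  then show ?thesis unfolding basis_family_def using inj indep G_def by simp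
qed


definition planes :: "(nat \<Rightarrow> 'v) \<Rightarrow> (nat \<Rightarrow> 'v) \<Rightarrow> nat \<Rightarrow> bool" where
  "planes p q r \<longleftrightarrow> (\<forall>m<r. \<forall>m'<r. B (p m) (q m') = (if m = m' then 1 else 0) \<and>
      B (p m) (p m') = 0 \<and> B (q m) (q m') = 0)"

definition Exc :: "(nat \<Rightarrow> bit) \<Rightarrow> nat \<Rightarrow> bool" where
  "Exc c r \<longleftrightarrow> (\<exists>p q. planes p q r \<and> (\<forall>m<r. Q (p m) = c m \<and> Q (q m) = c m))"

lemma planesD:
  assumes "planes p q r" "a < r" "b < r"
  shows "B (p a) (q b) = (if a = b then 1 else 0)" "B (q b) (p a) = (if a = b then 1 else 0)"
    "B (p a) (p b) = 0" "B (q a) (q b) = 0"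
  using assms B_sym unfolding planes_def by metis+

lemma Exc_cong: "(\<And>m. m < r \<Longrightarrow> c m = d m) \<Longrightarrow> Exc c r = Exc d r"
  unfolding Exc_def by auto

lemma Exc_perm:
  assumes "Exc c r" "\<And>m. m < r \<Longrightarrow> \<sigma> m < r" "inj_on \<sigma> {..<r}"
  shows "Exc (c \<circ> \<sigma>) r"
proof -
  from assms(1) obtain p q where pq: "planes p q r" "\<forall>m<r. Q (p m) = c m \<and> Q (q m) = c m"
    unfolding Exc_def by blast
  have "planes (p \<circ> \<sigma>) (q \<circ> \<sigma>) r"
    unfolding planes_def using planesD[OF pq(1)] assms(2,3) unfolding inj_on_def by auto
  moreover have "\<forall>m<r. Q ((p \<circ> \<sigma>) m) = (c \<circ> \<sigma>) m \<and> Q ((q \<circ> \<sigma>) m) = (c \<circ> \<sigma>) m"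
    using pq(2) assms(2) by auto
  ultimately show ?thesis unfolding Exc_def by blast
qed

lemma Exc_flip:
  assumes "Exc c r" "i < r" "j < r" "i \<noteq> j" "c i = c j"
  shows "Exc (c(i := c i + 1, j := c j + 1)) r"
proof -
  from assms(1) obtain p q where pq: "planes p q r" "\<forall>m<r. Q (p m) = c m \<and> Q (q m) = c m"
    unfolding Exc_def by blast
  note D = planesD[OF pq(1)]
  define p' where "p' = p(i := q i + p j + q j, j := p i + q i + q j)"
  define q' where "q' = q(i := p i + p j + q j, j := p i + q i + p j)"
  have "planes p' q' r"
    unfolding planes_def
  proof (intro allI impI)
    fix m m' assume m: "m < r" and m': "m' < r"
    show "B (p' m) (q' m') = (if m = m' then 1 else 0) \<and> B (p' m) (p' m') = 0 \<and> B (q' m) (q' m') = 0"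
      using m m' assms(2-4) unfolding p'_def q'_def
      by (cases "m = i"; cases "m = j"; cases "m' = i"; cases "m' = j") (simp_all add: D)
  qed
  moreover have "\<forall>m<r. Q (p' m) = (c(i := c i + 1, j := c j + 1)) m \<and> Q (q' m) = (c(i := c i + 1, j := c j + 1)) m"
  proof (intro allI impI)
    fix m assume m: "m < r"
    show "Q (p' m) = (c(i := c i + 1, j := c j + 1)) m \<and> Q (q' m) = (c(i := c i + 1, j := c j + 1)) m"
      using m assms(2-5) pq(2) unfolding p'_def q'_def
      by (cases "m = i"; cases "m = j"; cases "c i") (simp_all add: D Q_add)
  qed
  ultimately show ?thesis unfolding Exc_def by blast
qed


context
  fixes v :: "nat \<Rightarrow> 'v" and r :: nat
  assumes hQ: "\<forall>i<2*r. Q (v i) = 0"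
    and hB: "\<forall>i<2*r. \<forall>j<2*r. i \<noteq> j \<longrightarrow> B (v i) (v j) = 1"
begin

lemma hv: "i < 2*r \<Longrightarrow> j < 2*r \<Longrightarrow> B (v i) (v j) = (if i = j then 0 else 1)"
  using hB by auto

abbreviation "S \<equiv> Tsum (\<lambda>j. v (2*j)) (\<lambda>j. v (2*j+1))"

lemma L1: "k < 2*r \<Longrightarrow> m \<le> r \<Longrightarrow> B (v k) (S m) = (if k < 2*m then 1 else 0)"
proof (induction m)
  case 0
  then show ?case by simp
next
  case (Suc m)
  have a: "2*m < 2*r" "2*m+1 < 2*r" using Suc.prems by auto
  show ?case using Suc.IH Suc.prems a
    by (cases "k < 2*m"; cases "k = 2*m"; cases "k = 2*m+1") (simp_all add: hv)
qed

lemma L2: "m \<le> r \<Longrightarrow> Q (S m) = alt m"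
proof (induction m)
  case 0
  then show ?case by (simp add: alt_def)
next
  case (Suc m)
  have a: "2*m < 2*r" "2*m+1 < 2*r" using Suc.prems by auto
  have b: "B (S m) (v (2*m)) = 0" "B (S m) (v (2*m+1)) = 0"
    using L1[OF a(1), of m] L1[OF a(2), of m] Suc.prems B_sym by auto
  show ?case using Suc.IH Suc.prems a b hQ
    by (simp add: Q_add hv alt_def)
qed

lemma L3: "m \<le> r \<Longrightarrow> m' \<le> r \<Longrightarrow> B (S m) (S m') = 0"
proof (induction m)
  case 0
  then show ?case by simp
next
  case (Suc m)
  have a: "2*m < 2*r" "2*m+1 < 2*r" using Suc.prems by auto
  show ?case using Suc.IH Suc.prems a L1[OF a(1), of m'] L1[OF a(2), of m']
    by simp
qed

definition w where "w u = v u + S (u div 2)"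

lemma W1: "u < 2*r \<Longrightarrow> u' < 2*r \<Longrightarrow>
   B (w u) (w u') = (if u div 2 = u' div 2 \<and> u \<noteq> u' then 1 else 0)"
proof -
  assume u: "u < 2*r" and u': "u' < 2*r"
  have m: "u div 2 \<le> r" "u' div 2 \<le> r" using u u' by auto
  have "B (S (u div 2)) (v u') = B (v u') (S (u div 2))" by (rule B_sym)
  then show ?thesis using L1[OF u m(2)] L1[OF u' m(1)] L3[OF m] hv[OF u u'] unfolding w_def
    by auto
qed

lemma W2: "u < 2*r \<Longrightarrow> Q (w u) = alt (u div 2)"
proof -
  assume u: "u < 2*r"
  have m: "u div 2 \<le> r" using u by auto
  have n: "\<not> u < 2 * (u div 2)" by presburger
  show ?thesis using L1[OF u m] L2[OF m] hQ u n unfolding w_def by (simp add: Q_add)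
qed

lemma sym_to_Exc: "Exc alt r"
proof -
  have "planes (\<lambda>m. w (2*m)) (\<lambda>m. w (2*m+1)) r"
    unfolding planes_def by (auto simp: W1)
  moreover have "\<forall>m<r. Q (w (2*m)) = alt m \<and> Q (w (2*m+1)) = alt m"
    by (auto simp: W2)
  ultimately show ?thesis unfolding Exc_def by blast
qed

end


context
  fixes p q :: "nat \<Rightarrow> 'v" and r :: nat
  assumes pl: "planes p q r" and pQ: "\<forall>m<r. Q (p m) = alt m \<and> Q (q m) = alt m"
begin

abbreviation "T \<equiv> Tsum p q"

lemma M1: "k < r \<Longrightarrow> m \<le> r \<Longrightarrow> B (p k) (T m) = (if k < m then 1 else 0) \<and> B (q k) (T m) = (if k < m then 1 else 0)"
proof (induction m)
  case 0
  then show ?case by simp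
next
  case (Suc m)
  have a: "m < r" using Suc.prems by auto
  show ?case using Suc.IH Suc.prems a planesD[OF pl, of k m] planesD[OF pl, of m k]
    by (cases "k < m"; cases "k = m") simp_all
qed

lemma M2: "m \<le> r \<Longrightarrow> Q (T m) = alt m"
proof (induction m)
  case 0
  then show ?case by (simp add: alt_def)
next
  case (Suc m)
  have a: "m < r" using Suc.prems by auto
  have b: "B (T m) (p m) = 0" "B (T m) (q m) = 0"
    using M1[OF a, of m] Suc.prems B_sym by auto
  show ?case using Suc.IH Suc.prems a b pQ planesD[OF pl a a]
    by (simp add: Q_add alt_def)
qed

lemma M3: "m \<le> r \<Longrightarrow> m' \<le> r \<Longrightarrow> B (T m) (T m') = 0"
proof (induction m)
  case 0
  then show ?case by simp
next
  case (Suc m)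
  have a: "m < r" using Suc.prems by auto
  show ?case using Suc.IH Suc.prems M1[OF a, of m'] by simp
qed

definition z where "z u = (if even u then p (u div 2) else q (u div 2))"
definition vv where "vv u = z u + T (u div 2)"

lemma Z1: "u < 2*r \<Longrightarrow> u' < 2*r \<Longrightarrow>
   B (z u) (z u') = (if u div 2 = u' div 2 \<and> u \<noteq> u' then 1 else 0)"
proof -
  assume u: "u < 2*r" and u': "u' < 2*r"
  have m: "u div 2 < r" "u' div 2 < r" using u u' by auto
  have e: "even u \<Longrightarrow> even u' \<Longrightarrow> u div 2 = u' div 2 \<Longrightarrow> u = u'"
          "odd u \<Longrightarrow> odd u' \<Longrightarrow> u div 2 = u' div 2 \<Longrightarrow> u = u'" by presburger+
  consider "even u" "even u'" | "even u" "odd u'" | "odd u" "even u'" | "odd u" "odd u'" by blast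
  then show ?thesis
  proof cases
    case 1
    then have "\<not> (u div 2 = u' div 2 \<and> u \<noteq> u')" using e by blast
    then show ?thesis using 1 planesD(3)[OF pl m] unfolding z_def by simp
  next
    case 2
    then have "(u div 2 = u' div 2 \<and> u \<noteq> u') = (u div 2 = u' div 2)" by auto
    then show ?thesis using 2 planesD(1)[OF pl m] unfolding z_def by simp
  next
    case 3
    then have "(u div 2 = u' div 2 \<and> u \<noteq> u') = (u' div 2 = u div 2)" by auto
    then show ?thesis using 3 planesD(2)[OF pl m(2) m(1)] unfolding z_def by simp
  next
    case 4
    then have "\<not> (u div 2 = u' div 2 \<and> u \<noteq> u')" using e by blast
    then show ?thesis using 4 planesD(4)[OF pl m] unfolding z_def by simp
  qed
qed

lemma Z2: "u < 2*r \<Longrightarrow> m \<le> r \<Longrightarrow> B (z u) (T m) = (if u div 2 < m then 1 else 0)"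
  unfolding z_def using M1[of "u div 2" m] by auto

lemma Z3: "u < 2*r \<Longrightarrow> Q (z u) = alt (u div 2)"
  unfolding z_def using pQ by auto

lemma V1: "u < 2*r \<Longrightarrow> Q (vv u) = 0"
proof -
  assume u: "u < 2*r"
  have m: "u div 2 \<le> r" using u by auto
  show ?thesis unfolding vv_def using Z2[OF u m] Z3[OF u] M2[OF m] by (simp add: Q_add)
qed

lemma V2: "u < 2*r \<Longrightarrow> u' < 2*r \<Longrightarrow> B (vv u) (vv u') = (if u = u' then 0 else 1)"
proof -
  assume u: "u < 2*r" and u': "u' < 2*r"
  have m: "u div 2 \<le> r" "u' div 2 \<le> r" using u u' by auto
  have s: "B (T (u div 2)) (z u') = B (z u') (T (u div 2))" by (rule B_sym)
  have "B (vv u) (vv u') = B (z u) (z u') + B (z u) (T (u' div 2)) + (B (z u') (T (u div 2)) + B (T (u div 2)) (T (u' div 2)))"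
    unfolding vv_def B_addL B_addR s by (simp only: ac_simps)
  also have "\<dots> = (if u div 2 = u' div 2 \<and> u \<noteq> u' then 1 else 0) + (if u div 2 < u' div 2 then 1 else 0)
     + ((if u' div 2 < u div 2 then 1 else 0) + 0)"
    unfolding Z1[OF u u'] Z2[OF u m(2)] Z2[OF u' m(1)] M3[OF m] by (rule refl)
  also have "\<dots> = (if u = u' then 0 else 1)"
  proof (cases "u div 2 = u' div 2")
    case True
    then show ?thesis by simp
  next
    case False
    have ne: "u \<noteq> u'" using False by blast
    show ?thesis
    proof (cases "u div 2 < u' div 2")
      case True
      then have "\<not> u' div 2 < u div 2" by linarith
      then show ?thesis using True False ne by simp
    next
      case F2: False
      then have "u' div 2 < u div 2" using False by linarith
      then show ?thesis using F2 False ne by simp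
    qed
  qed
  finally show ?thesis .
qed

lemma V3: "u < 2*r \<Longrightarrow> B (vv u) (T r) = 1"
proof -
  assume u: "u < 2*r"
  have m: "u div 2 \<le> r" "u div 2 < r" using u by auto
  show ?thesis unfolding vv_def using Z2[OF u order.refl] M3[OF m(1) order.refl] m by simp
qed

lemma Exc_to_sym:
  assumes d: "dim (UNIV::'v set) = 2*r" and r0: "r \<ge> 1"
  shows "has_symmetric_basis scale Q r"
proof -
  have "basis_family scale vv (2*r)"
  proof (rule dual_basis[OF d])
    show "2*r > 0" using r0 by simp
    show "\<forall>i<2*r. \<exists>h. \<forall>j<2*r. B (vv j) h = (if j = i then 1 else 0)"
    proof (intro allI impI)
      fix i assume i: "i < 2*r"
      show "\<exists>h. \<forall>j<2*r. B (vv j) h = (if j = i then 1 else 0)"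
      proof (intro exI allI impI)
        fix j assume j: "j < 2*r"
        have "B (vv j) (T r + vv i) = 1 + (if j = i then 0 else 1)"
          using V3[OF j] V2[OF j i] by simp
        then show "B (vv j) (T r + vv i) = (if j = i then 1 else 0)" by simp
      qed
    qed
  qed
  moreover have "\<forall>i<2*r. Q (vv i) = 0" using V1 by blast
  moreover have "\<forall>i<2*r. \<forall>j<2*r. i \<noteq> j \<longrightarrow> B (vv i) (vv j) = 1" using V2 by simp
  ultimately show ?thesis unfolding has_symmetric_basis_def by blast
qed

end


lemma dual_planes:
  assumes pl: "planes p q r" and k: "\<forall>j<n. k j < r"
    and inj: "\<forall>i<n. \<forall>j<n. k i = k j \<and> s i = s j \<longrightarrow> i = j"
    and d: "dim (UNIV::'v set) = n" and n0: "n > 0"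
  shows "basis_family scale (\<lambda>j. if s j then p (k j) else q (k j)) n"
proof (rule dual_basis[OF d n0], intro allI impI)
  fix i assume i: "i < n"
  show "\<exists>h. \<forall>j<n. B (if s j then p (k j) else q (k j)) h = (if j = i then 1 else 0)"
  proof (intro exI allI impI)
    fix j assume j: "j < n"
    have ki: "k i < r" and kj: "k j < r" using k i j by auto
    have ij: "(j = i) = (k j = k i \<and> s j = s i)" using inj i j by auto
    show "B (if s j then p (k j) else q (k j)) (if s i then q (k i) else p (k i)) = (if j = i then 1 else 0)"
      unfolding ij using planesD[OF pl kj ki] planesD[OF pl ki kj]
      by (cases "s i"; cases "s j") auto
  qed
qed

lemma hyp_to_Exc: "hyperbolic scale Q r \<Longrightarrow> Exc (\<lambda>_. 0) r"
  unfolding hyperbolic_def Exc_def planes_def by blast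

lemma Exc_to_hyp:
  assumes "Exc (\<lambda>_. 0) r" and d: "dim (UNIV::'v set) = 2*r" and r0: "r \<ge> 1"
  shows "hyperbolic scale Q r"
proof -
  from assms(1) obtain p q where pq: "planes p q r" "\<forall>m<r. Q (p m) = 0 \<and> Q (q m) = 0"
    unfolding Exc_def by blast
  have eq: "(\<lambda>i. if i < r then p i else q (i - r)) =
      (\<lambda>j. if j < r then p (if j < r then j else j - r) else q (if j < r then j else j - r))"
    by auto
  have "basis_family scale (\<lambda>j. if j < r then p (if j < r then j else j - r) else q (if j < r then j else j - r)) (2*r)"
    by (rule dual_planes[OF pq(1) _ _ d]) (use r0 in auto)
  then have "basis_family scale (\<lambda>i. if i < r then p i else q (i - r)) (2*r)"
    using eq by simp
  then show ?thesis unfolding hyperbolic_def using pq planesD[OF pq(1)] by blast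
qed

definition ell :: "nat \<Rightarrow> nat \<Rightarrow> bit" where "ell r m = (if m = r - 1 then 1 else 0)"

lemma ell_to_Exc: assumes "elliptic scale Q r" "r \<ge> 1" shows "Exc (ell r) r"
proof -
  from assms(1) obtain e f x y where H:
     "(\<forall>i<r-1. Q (e i) = 0 \<and> Q (f i) = 0)"
     "(\<forall>i<r-1. \<forall>j<r-1. B (e i) (e j) = 0 \<and> B (f i) (f j) = 0 \<and>
                   B (e i) (f j) = (if i = j then 1 else 0))"
     "(\<forall>i<r-1. B (e i) x = 0 \<and> B (e i) y = 0 \<and> B (f i) x = 0 \<and> B (f i) y = 0)"
     "Q x = 1" "Q y = 1" "B x y = 1"
    unfolding elliptic_def by blast
  define p where "p m = (if m < r - 1 then e m else x)" for m
  define q where "q m = (if m < r - 1 then f m else y)" for m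
  have "planes p q r"
    unfolding planes_def
  proof (intro allI impI)
    fix m m' assume m: "m < r" and m': "m' < r"
    show "B (p m) (q m') = (if m = m' then 1 else 0) \<and> B (p m) (p m') = 0 \<and> B (q m) (q m') = 0"
    proof (cases "m < r - 1"; cases "m' < r - 1")
      assume a: "m < r - 1" "m' < r - 1"
      then show ?thesis using H(2) unfolding p_def q_def by auto
    next
      assume a: "m < r - 1" "\<not> m' < r - 1"
      then show ?thesis using H(3) unfolding p_def q_def by auto
    next
      assume a: "\<not> m < r - 1" "m' < r - 1"
      then show ?thesis using H(3) B_sym unfolding p_def q_def by auto
    next
      assume a: "\<not> m < r - 1" "\<not> m' < r - 1"
      then have "m = m'" using m m' by auto
      then show ?thesis using a H(6) unfolding p_def q_def by auto
    qed
  qed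
  moreover have "\<forall>m<r. Q (p m) = ell r m \<and> Q (q m) = ell r m"
    using H(1,4,5) unfolding p_def q_def ell_def by auto
  ultimately show ?thesis unfolding Exc_def by blast
qed

lemma Exc_to_ell:
  assumes "Exc (ell r) r" and d: "dim (UNIV::'v set) = 2*r" and r0: "r \<ge> 1"
  shows "elliptic scale Q r"
proof -
  from assms(1) obtain p q where pq: "planes p q r" "\<forall>m<r. Q (p m) = ell r m \<and> Q (q m) = ell r m"
    unfolding Exc_def by blast
  define s where "s j = (j < r - 1 \<or> j = 2 * (r - 1))" for j
  define k where "k j = (if j < r - 1 then j else if j < 2 * (r - 1) then j - (r - 1) else r - 1)" for j
  have eq: "(\<lambda>i. if i < r - 1 then p i else if i < 2 * (r - 1) then q (i - (r - 1))
            else if i = 2 * (r - 1) then p (r - 1) else q (r - 1)) =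
      (\<lambda>j. if s j then p (k j) else q (k j))"
    unfolding s_def k_def by auto
  have "basis_family scale (\<lambda>j. if s j then p (k j) else q (k j)) (2*r)"
    by (rule dual_planes[OF pq(1) _ _ d]) (use r0 in \<open>auto simp: s_def k_def split: if_splits\<close>)
  then have b: "basis_family scale (\<lambda>i. if i < r - 1 then p i else if i < 2 * (r - 1) then q (i - (r - 1))
            else if i = 2 * (r - 1) then p (r - 1) else q (r - 1)) (2*r)"
    using eq by simp
  have r1: "r - 1 < r" using r0 by simp
  show ?thesis unfolding elliptic_def
    apply (rule exI[of _ p], rule exI[of _ q], rule exI[of _ "p (r - 1)"], rule exI[of _ "q (r - 1)"])
    using b pq(2) r1 planesD[OF pq(1)] unfolding ell_def by auto
qed


definition ck :: "nat \<Rightarrow> nat \<Rightarrow> bit" where "ck k m = (if m < 4*k then 0 else alt m)"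

lemma ck_step:
  assumes "4 * Suc k \<le> r"
  shows "Exc (ck k) r = Exc (ck (Suc k)) r"
proof
  have i: "4*k+1 < r" "4*k+3 < r" using assms by auto
  assume "Exc (ck k) r"
  from Exc_flip[OF this i(1) i(2)] have
    "Exc ((ck k)(4*k+1 := ck k (4*k+1) + 1, 4*k+3 := ck k (4*k+3) + 1)) r"
    by (simp add: ck_def alt_def)
  moreover have "\<And>m. m < r \<Longrightarrow> ((ck k)(4*k+1 := ck k (4*k+1) + 1, 4*k+3 := ck k (4*k+3) + 1)) m = ck (Suc k) m"
    unfolding ck_def alt_def by auto presburger+
  ultimately show "Exc (ck (Suc k)) r" using Exc_cong by blast
next
  have i: "4*k+1 < r" "4*k+3 < r" using assms by auto
  assume "Exc (ck (Suc k)) r"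
  from Exc_flip[OF this i(1) i(2)] have
    "Exc ((ck (Suc k))(4*k+1 := ck (Suc k) (4*k+1) + 1, 4*k+3 := ck (Suc k) (4*k+3) + 1)) r"
    by (simp add: ck_def alt_def)
  moreover have "\<And>m. m < r \<Longrightarrow> ((ck (Suc k))(4*k+1 := ck (Suc k) (4*k+1) + 1, 4*k+3 := ck (Suc k) (4*k+3) + 1)) m = ck k m"
    unfolding ck_def alt_def by auto presburger+
  ultimately show "Exc (ck k) r" using Exc_cong by blast
qed

lemma ck_K: "4 * K \<le> r \<Longrightarrow> Exc alt r = Exc (ck K) r"
proof (induction K)
  case 0
  have "ck 0 = alt" by (auto simp: ck_def)
  then show ?case by simp
next
  case (Suc K)
  then show ?case using ck_step[OF Suc.prems] by simp
qed


lemma sym_iff_Exc: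
  assumes d: "dim (UNIV::'v set) = 2*r" and r0: "r \<ge> 1"
  shows "has_symmetric_basis scale Q r = Exc alt r"
proof
  assume "has_symmetric_basis scale Q r"
  then obtain v where "\<forall>i<2*r. Q (v i) = 0" "\<forall>i<2*r. \<forall>j<2*r. i \<noteq> j \<longrightarrow> B (v i) (v j) = 1"
    unfolding has_symmetric_basis_def by blast
  then show "Exc alt r" by (rule sym_to_Exc)
next
  assume "Exc alt r"
  then obtain p q where "planes p q r" "\<forall>m<r. Q (p m) = alt m \<and> Q (q m) = alt m"
    unfolding Exc_def by blast
  then show "has_symmetric_basis scale Q r" using Exc_to_sym d r0 by blast
qed

lemma main:
  assumes d: "dim (UNIV::'v set) = 2*r" and r0: "r \<ge> 1"
  shows "has_symmetric_basis scale Q r \<longleftrightarrow>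
           (hyperbolic scale Q r \<and> (r mod 4 = 0 \<or> r mod 4 = 1)) \<or>
           (elliptic scale Q r \<and> (r mod 4 = 2 \<or> r mod 4 = 3))"
proof -
  define K where "K = r div 4"
  have K: "4 * K \<le> r" unfolding K_def by simp
  have S: "has_symmetric_basis scale Q r = Exc (ck K) r"
    using sym_iff_Exc[OF d r0] ck_K[OF K] by simp
  have H: "hyperbolic scale Q r = Exc (\<lambda>_. 0) r"
    using hyp_to_Exc Exc_to_hyp[OF _ d r0] by blast
  have E: "elliptic scale Q r = Exc (ell r) r"
    using ell_to_Exc[OF _ r0] Exc_to_ell[OF _ d r0] by blast
  have "r mod 4 = 0 \<or> r mod 4 = 1 \<or> r mod 4 = 2 \<or> r mod 4 = 3" by auto
  moreover
  { assume c: "r mod 4 = 0 \<or> r mod 4 = 1"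
    have "Exc (ck K) r = Exc (\<lambda>_. 0) r"
    proof (rule Exc_cong)
      fix m assume "m < r"
      then show "ck K m = 0" using c unfolding ck_def alt_def K_def by auto presburger
    qed
    then have ?thesis using S H c by auto }
  moreover
  { assume c: "r mod 4 = 2"
    have "Exc (ck K) r = Exc (ell r) r"
    proof (rule Exc_cong)
      fix m assume "m < r"
      then show "ck K m = ell r m" using c unfolding ck_def alt_def K_def ell_def by auto presburger+
    qed
    then have ?thesis using S E c by auto }
  moreover
  { assume c: "r mod 4 = 3"
    define \<sigma> where "\<sigma> m = (if m = r - 2 then r - 1 else if m = r - 1 then r - 2 else m)" for m
    have sr: "\<And>m. m < r \<Longrightarrow> \<sigma> m < r" using c unfolding \<sigma>_def by auto
    have si: "inj_on \<sigma> {..<r}" using c unfolding \<sigma>_def inj_on_def by auto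
    have e1: "\<And>m. m < r \<Longrightarrow> (ck K \<circ> \<sigma>) m = ell r m"
      using c unfolding \<sigma>_def ck_def alt_def K_def ell_def by auto presburger+
    have e2: "\<And>m. m < r \<Longrightarrow> (ell r \<circ> \<sigma>) m = ck K m"
      using c unfolding \<sigma>_def ck_def alt_def K_def ell_def by auto presburger+
    have x1: "Exc (ck K \<circ> \<sigma>) r = Exc (ell r) r" by (rule Exc_cong) (rule e1)
    have x2: "Exc (ell r \<circ> \<sigma>) r = Exc (ck K) r" by (rule Exc_cong) (rule e2)
    have "Exc (ck K) r = Exc (ell r) r"
      using Exc_perm[of "ck K" r \<sigma>] Exc_perm[of "ell r" r \<sigma>] sr si x1 x2 by blast
    then have ?thesis using S E c by auto }
  ultimately show ?thesis by metis
qed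

end

theorem theorem3p5:
  fixes scale :: "bit \<Rightarrow> 'v::ab_group_add \<Rightarrow> 'v"
    and Q :: "'v \<Rightarrow> bit"
    and r :: nat
  assumes "vector_space scale"
    and "r \<ge> 1"
    and "vector_space.dim scale (UNIV :: 'v set) = 2 * r"
    and "is_quadratic_form scale Q"
    and "nondegenerate Q"
  shows "has_symmetric_basis scale Q r \<longleftrightarrow>
           (hyperbolic scale Q r \<and> (r mod 4 = 0 \<or> r mod 4 = 1)) \<or>
           (elliptic scale Q r \<and> (r mod 4 = 2 \<or> r mod 4 = 3))"
proof -
  interpret qfs scale Q
    by (rule qfs.intro[OF assms(1)]) (rule qfs_axioms.intro[OF assms(4)])
  show ?thesis by (rule main[OF assms(3) assms(2)])
qed

end
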